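(* Let $(H,k,\chi)$ be an instance of Precoloring Extension with $H=(\{1,\dots,n\},F)$ having at least one edge and $\chi:V_0\to\{1,\dots,k\}$. Let $X=nk+1$; let $u_j=\chi(j)$, $\ell_j=\chi(j)$ for $j\in V_0$ and $u_j=k$, $\ell_j=1$ for $j\notin V_0$. Construct a $P_n\,|\,\mathrm{conc}\,|\,\sum C_j$ instance: jobs $1,\dots,n$ with $p_j=1$ and conflict graph initially $H$; for each $j\in\{1,\dots,n\}$, jobs $j(1),\dots,j(X)$ with processing time $X-u_j$, each in conflict with $j$, and for each $i\in\{1,\dots,X\}$ jobs $j(i,1),\dots,j(i,X)$ with processing time $u_j$, each in conflict with $j(i)$; for each $j\in V_0$ with $\chi(j)>1$, jobs $j^*(1),\dots,j^*(X)$ with processing time $\ell_j-1$, each in conflict with $j$ only. Let $K=\sum_{j=1}^n\big[(1+u_j)X^2+(\ell_j-1)X\big]+nk$. If $(H,k,\chi)$ has a solution $\chi':\{1,\dots,n\}\to\{1,\dots,k\}$, then the constructed instance has a feasible schedule with total completion time at most $K$.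
   Context: Precoloring Extension: given a graph $H=(V,F)$, an integer $k$, and a proper coloring $\chi:V_0\to\{1,\dots,k\}$ of $H[V_0]$ for some $V_0\subseteq V$, a solution is a proper coloring $\chi':V\to\{1,\dots,k\}$ of $H$ with $\chi'(v)=\chi(v)$ for all $v\in V_0$. In $P_n\,|\,\mathrm{conc}\,|\,\sum C_j$, each job $j$ has integer processing time $p_j\ge1$ and release time $0$, and there is a conflict graph $G$ (the edges listed); a schedule assigning completion times $C_j\in\mathbb{N}$ is feasible if $C_j-p_j\ge0$ for all $j$ and $[C_i-p_i,C_i)\cap[C_j-p_j,C_j)=\emptyset$ for all conflicting pairs $\{i,j\}$; the total completion time is $\sum_j C_j$ over all jobs. *)

theory Defs
  imports Main
begin

definition graph_on :: "nat \<Rightarrow> nat set set \<Rightarrow> bool" where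
  "graph_on n F \<longleftrightarrow> (\<forall>e\<in>F. e \<subseteq> {1..n} \<and> card e = 2)"

definition pce_instance :: "nat \<Rightarrow> nat set set \<Rightarrow> nat \<Rightarrow> nat set \<Rightarrow> (nat \<Rightarrow> nat) \<Rightarrow> bool" where
  "pce_instance n F k V0 chi \<longleftrightarrow> graph_on n F \<and> V0 \<subseteq> {1..n} \<and>
     (\<forall>v\<in>V0. chi v \<in> {1..k}) \<and>
     (\<forall>a\<in>V0. \<forall>b\<in>V0. {a,b} \<in> F \<longrightarrow> chi a \<noteq> chi b)"

definition pce_solution :: "nat \<Rightarrow> nat set set \<Rightarrow> nat \<Rightarrow> nat set \<Rightarrow> (nat \<Rightarrow> nat) \<Rightarrow> (nat \<Rightarrow> nat) \<Rightarrow> bool" where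
  "pce_solution n F k V0 chi chi' \<longleftrightarrow>
     (\<forall>v\<in>{1..n}. chi' v \<in> {1..k}) \<and>
     (\<forall>a\<in>{1..n}. \<forall>b\<in>{1..n}. {a,b} \<in> F \<longrightarrow> chi' a \<noteq> chi' b) \<and>
     (\<forall>v\<in>V0. chi' v = chi v)"

definition feasible_schedule :: "'j set \<Rightarrow> ('j \<Rightarrow> nat) \<Rightarrow> 'j set set \<Rightarrow> ('j \<Rightarrow> nat) \<Rightarrow> bool" where
  "feasible_schedule J p E C \<longleftrightarrow>
     (\<forall>j\<in>J. p j \<le> C j) \<and>
     (\<forall>a b. {a,b} \<in> E \<longrightarrow> {C a - p a..<C a} \<inter> {C b - p b..<C b} = {})"

definition total_completion :: "'j set \<Rightarrow> ('j \<Rightarrow> nat) \<Rightarrow> nat" where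
  "total_completion J C = (\<Sum>j\<in>J. C j)"

text \<open>Base j = job j; Aux j i = j(i); AuxAux j i m = j(i,m); Star j i = j*(i).\<close>
datatype job = Base nat | Aux nat nat | AuxAux nat nat nat | Star nat nat

definition bigX :: "nat \<Rightarrow> nat \<Rightarrow> nat" where
  "bigX n k = n * k + 1"

definition uu :: "nat \<Rightarrow> nat set \<Rightarrow> (nat \<Rightarrow> nat) \<Rightarrow> nat \<Rightarrow> nat" where
  "uu k V0 chi j = (if j \<in> V0 then chi j else k)"

definition ll :: "nat set \<Rightarrow> (nat \<Rightarrow> nat) \<Rightarrow> nat \<Rightarrow> nat" where
  "ll V0 chi j = (if j \<in> V0 then chi j else 1)"

definition red_jobs :: "nat \<Rightarrow> nat \<Rightarrow> nat set \<Rightarrow> (nat \<Rightarrow> nat) \<Rightarrow> job set" where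
  "red_jobs n k V0 chi =
     {Base j | j. j \<in> {1..n}} \<union>
     {Aux j i | j i. j \<in> {1..n} \<and> i \<in> {1..bigX n k}} \<union>
     {AuxAux j i m | j i m. j \<in> {1..n} \<and> i \<in> {1..bigX n k} \<and> m \<in> {1..bigX n k}} \<union>
     {Star j i | j i. j \<in> V0 \<and> chi j > 1 \<and> i \<in> {1..bigX n k}}"

fun red_p :: "nat \<Rightarrow> nat \<Rightarrow> nat set \<Rightarrow> (nat \<Rightarrow> nat) \<Rightarrow> job \<Rightarrow> nat" where
  "red_p n k V0 chi (Base j) = 1"
| "red_p n k V0 chi (Aux j i) = bigX n k - uu k V0 chi j"
| "red_p n k V0 chi (AuxAux j i m) = uu k V0 chi j"
| "red_p n k V0 chi (Star j i) = ll V0 chi j - 1"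

definition red_edges :: "nat \<Rightarrow> nat set set \<Rightarrow> nat \<Rightarrow> nat set \<Rightarrow> (nat \<Rightarrow> nat) \<Rightarrow> job set set" where
  "red_edges n F k V0 chi =
     {{Base a, Base b} | a b. {a,b} \<in> F} \<union>
     {{Aux j i, Base j} | j i. j \<in> {1..n} \<and> i \<in> {1..bigX n k}} \<union>
     {{AuxAux j i m, Aux j i} | j i m. j \<in> {1..n} \<and> i \<in> {1..bigX n k} \<and> m \<in> {1..bigX n k}} \<union>
     {{Star j i, Base j} | j i. j \<in> V0 \<and> chi j > 1 \<and> i \<in> {1..bigX n k}}"

definition red_K :: "nat \<Rightarrow> nat \<Rightarrow> nat set \<Rightarrow> (nat \<Rightarrow> nat) \<Rightarrow> nat" where
  "red_K n k V0 chi =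
     (\<Sum>j=1..n. (1 + uu k V0 chi j) * (bigX n k)^2 + (ll V0 chi j - 1) * bigX n k) + n * k"

end

theory Submission
  imports Defs
begin

lemma sum_Un_le_nat: "finite A \<Longrightarrow> finite B \<Longrightarrow> sum (f::'a\<Rightarrow>nat) (A \<union> B) \<le> sum f A + sum f B"
  by (simp add: sum_Un_nat)

theorem lemma11:
  fixes n k :: nat and F :: "nat set set" and V0 :: "nat set" and chi :: "nat \<Rightarrow> nat"
  assumes "pce_instance n F k V0 chi"
    and "F \<noteq> {}"
    and "\<exists>chi'. pce_solution n F k V0 chi chi'"
  shows "\<exists>C. feasible_schedule (red_jobs n k V0 chi) (red_p n k V0 chi) (red_edges n F k V0 chi) C
           \<and> total_completion (red_jobs n k V0 chi) C \<le> red_K n k V0 chi"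
proof -
  obtain c where sol: "pce_solution n F k V0 chi c" using assms(3) by blast
  have gr: "graph_on n F" and V0s: "V0 \<subseteq> {1..n}" and chik: "\<forall>v\<in>V0. chi v \<in> {1..k}"
    using assms(1) unfolding pce_instance_def by auto
  have c1: "\<forall>v\<in>{1..n}. c v \<in> {1..k}" and c2: "\<forall>a\<in>{1..n}. \<forall>b\<in>{1..n}. {a,b} \<in> F \<longrightarrow> c a \<noteq> c b"
    and c3: "\<forall>v\<in>V0. c v = chi v" using sol unfolding pce_solution_def by auto
  define X where "X = bigX n k"
  define u where "u = uu k V0 chi"
  define l where "l = ll V0 chi"
  define p where "p = red_p n k V0 chi"
  have uk: "u j \<le> k" if "j \<in> {1..n}" for j using chik that unfolding u_def uu_def by auto
  have kX: "k \<le> X" if "j \<in> {1..n}" for j using that unfolding X_def bigX_def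
    by (cases n) auto
  have uX: "u j \<le> X" if "j \<in> {1..n}" for j using uk[OF that] kX[OF that] by linarith
  have cu: "c j \<le> u j" if "j \<in> {1..n}" for j using c1 c3 that unfolding u_def uu_def by auto
  have l1: "l j - 1 = (if j \<in> V0 then chi j - 1 else 0)" for j unfolding l_def ll_def by auto
  define C where "C = (\<lambda>x. case x of Base j \<Rightarrow> c j | Aux j i \<Rightarrow> X | AuxAux j i m \<Rightarrow> u j
                          | Star j i \<Rightarrow> l j - 1)"
  have feas: "feasible_schedule (red_jobs n k V0 chi) p (red_edges n F k V0 chi) C"
    unfolding feasible_schedule_def
  proof (intro conjI allI impI ballI)
    fix x assume "x \<in> red_jobs n k V0 chi"
    then show "p x \<le> C x" unfolding red_jobs_def p_def C_def
      using c1 by (auto simp: X_def[symmetric] u_def[symmetric] l_def[symmetric])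
  next
    fix a b assume e: "{a, b} \<in> red_edges n F k V0 chi"
    have key: "{C a - p a..<C a} \<inter> {C b - p b..<C b} = {}"
      if "{C a - p a..<C a} = A" "{C b - p b..<C b} = B" "A \<inter> B = {}" for A B
      using that by simp
    have symm: "\<And>x y. {C x - p x..<C x} \<inter> {C y - p y..<C y} = {} \<Longrightarrow>
        {C y - p y..<C y} \<inter> {C x - p x..<C x} = {}" by blast
    have D: "{C x - p x..<C x} \<inter> {C y - p y..<C y} = {}" if "{x,y} \<in> red_edges n F k V0 chi" for x y
    proof -
      from that have "(\<exists>a' b'. {x,y} = {Base a', Base b'} \<and> {a',b'} \<in> F) \<or>
          (\<exists>j i. {x,y} = {Aux j i, Base j} \<and> j \<in> {1..n}) \<or>
          (\<exists>j i m. {x,y} = {AuxAux j i m, Aux j i} \<and> j \<in> {1..n}) \<or>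
          (\<exists>j i. {x,y} = {Star j i, Base j} \<and> j \<in> V0 \<and> chi j > 1)"
        unfolding red_edges_def by blast
      then consider
        (BB) a' b' where "{x,y} = {Base a', Base b'}" "{a',b'} \<in> F"
      | (AB) j i where "{x,y} = {Aux j i, Base j}" "j \<in> {1..n}"
      | (AA) j i m where "{x,y} = {AuxAux j i m, Aux j i}" "j \<in> {1..n}"
      | (SB) j i where "{x,y} = {Star j i, Base j}" "j \<in> V0" "chi j > 1"
        by blast
      then show ?thesis
      proof cases
        case BB
        have "{a',b'} \<subseteq> {1..n}" "card {a',b'} = 2" using gr BB(2) unfolding graph_on_def by auto
        then have "a' \<in> {1..n}" "b' \<in> {1..n}" "a' \<noteq> b'" by (auto split: if_splits)
        then have "c a' \<noteq> c b'" using c2 BB(2) by auto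
        then show ?thesis using BB(1) by (auto simp: C_def p_def doubleton_eq_iff)
      next
        case AB
        have "{C (Aux j i) - p (Aux j i)..<C (Aux j i)} \<inter> {C (Base j) - p (Base j)..<C (Base j)} = {}"
          using cu[OF AB(2)] uX[OF AB(2)] by (auto simp: C_def p_def X_def[symmetric] u_def[symmetric])
        then show ?thesis using AB(1) symm by (auto simp: doubleton_eq_iff)
      next
        case AA
        have "{C (AuxAux j i m) - p (AuxAux j i m)..<C (AuxAux j i m)} \<inter> {C (Aux j i) - p (Aux j i)..<C (Aux j i)} = {}"
          using uX[OF AA(2)] by (auto simp: C_def p_def X_def[symmetric] u_def[symmetric])
        then show ?thesis using AA(1) symm by (auto simp: doubleton_eq_iff)
      next
        case SB
        have "{C (Star j i) - p (Star j i)..<C (Star j i)} \<inter> {C (Base j) - p (Base j)..<C (Base j)} = {}"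
          using SB c3 by (auto simp: C_def p_def l_def ll_def)
        then show ?thesis using SB(1) symm by (auto simp: doubleton_eq_iff)
      qed
    qed
    show "{C a - p a..<C a} \<inter> {C b - p b..<C b} = {}" using D[OF e] .
  qed
  define N where "N = {1..n}"
  define I where "I = {1..X}"
  have J: "red_jobs n k V0 chi \<subseteq> Base ` N \<union> (\<lambda>(j,i). Aux j i) ` (N \<times> I)
      \<union> (\<lambda>(j,i,m). AuxAux j i m) ` (N \<times> I \<times> I) \<union> (\<lambda>(j,i). Star j i) ` (N \<times> I)"
  proof (rule subsetI)
    fix x assume "x \<in> red_jobs n k V0 chi"
    then consider (B) j where "x = Base j" "j \<in> N"
      | (A) j i where "x = Aux j i" "(j,i) \<in> N \<times> I"
      | (AA) j i m where "x = AuxAux j i m" "(j,i,m) \<in> N \<times> I \<times> I"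
      | (S) j i where "x = Star j i" "(j,i) \<in> N \<times> I"
      unfolding red_jobs_def N_def I_def X_def using V0s by blast
    then show "x \<in> Base ` N \<union> (\<lambda>(j,i). Aux j i) ` (N \<times> I)
      \<union> (\<lambda>(j,i,m). AuxAux j i m) ` (N \<times> I \<times> I) \<union> (\<lambda>(j,i). Star j i) ` (N \<times> I)"
    proof cases
      case B then show ?thesis by blast
    next
      case A
      have "x \<in> (\<lambda>(j,i). Aux j i) ` (N \<times> I)" by (rule rev_image_eqI[OF A(2)]) (simp add: A(1))
      then show ?thesis by blast
    next
      case AA
      have "x \<in> (\<lambda>(j,i,m). AuxAux j i m) ` (N \<times> I \<times> I)" by (rule rev_image_eqI[OF AA(2)]) (simp add: AA(1))
      then show ?thesis by blast
    next
      case S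
      have "x \<in> (\<lambda>(j,i). Star j i) ` (N \<times> I)" by (rule rev_image_eqI[OF S(2)]) (simp add: S(1))
      then show ?thesis by blast
    qed
  qed
  have fin: "finite (Base ` N)" "finite ((\<lambda>(j,i). Aux j i) ` (N \<times> I))"
     "finite ((\<lambda>(j,i,m). AuxAux j i m) ` (N \<times> I \<times> I))" "finite ((\<lambda>(j,i). Star j i) ` (N \<times> I))"
    unfolding N_def I_def by auto
  have "total_completion (red_jobs n k V0 chi) C \<le> sum C (Base ` N \<union> (\<lambda>(j,i). Aux j i) ` (N \<times> I)
      \<union> (\<lambda>(j,i,m). AuxAux j i m) ` (N \<times> I \<times> I) \<union> (\<lambda>(j,i). Star j i) ` (N \<times> I))"
    unfolding total_completion_def by (rule sum_mono2) (use J fin in auto)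
  also have "\<dots> \<le> sum C (Base ` N) + sum C ((\<lambda>(j,i). Aux j i) ` (N \<times> I))
      + sum C ((\<lambda>(j,i,m). AuxAux j i m) ` (N \<times> I \<times> I)) + sum C ((\<lambda>(j,i). Star j i) ` (N \<times> I))"
    by (smt (verit, del_insts) add_le_mono fin(1) fin(2) fin(3) fin(4) finite_UnI le_refl order_trans sum_Un_le_nat)
  also have "sum C (Base ` N) = (\<Sum>j\<in>N. c j)"
    by (subst sum.reindex) (auto simp: inj_on_def C_def)
  also have "sum C ((\<lambda>(j,i). Aux j i) ` (N \<times> I)) = (\<Sum>j\<in>N. X * X)"
  proof -
    have "sum C ((\<lambda>(j,i). Aux j i) ` (N \<times> I)) = (\<Sum>(j,i)\<in>N \<times> I. C (Aux j i))"
      by (subst sum.reindex) (auto simp: inj_on_def intro!: sum.cong)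
    also have "\<dots> = (\<Sum>j\<in>N. \<Sum>i\<in>I. C (Aux j i))" by (simp add: sum.cartesian_product)
    also have "\<dots> = (\<Sum>j\<in>N. X * X)" by (simp add: C_def I_def)
    finally show ?thesis .
  qed
  also have "sum C ((\<lambda>(j,i,m). AuxAux j i m) ` (N \<times> I \<times> I)) = (\<Sum>j\<in>N. X * X * u j)"
  proof -
    have "sum C ((\<lambda>(j,i,m). AuxAux j i m) ` (N \<times> I \<times> I)) = (\<Sum>(j,i,m)\<in>N \<times> I \<times> I. C (AuxAux j i m))"
      by (subst sum.reindex) (auto simp: inj_on_def intro!: sum.cong)
    also have "\<dots> = (\<Sum>j\<in>N. \<Sum>(i,m)\<in>I \<times> I. C (AuxAux j i m))"
      by (simp add: sum.cartesian_product)
    also have "\<dots> = (\<Sum>j\<in>N. \<Sum>i\<in>I. \<Sum>m\<in>I. C (AuxAux j i m))"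
      by (simp add: sum.cartesian_product)
    also have "\<dots> = (\<Sum>j\<in>N. X * X * u j)" by (simp add: C_def I_def mult.assoc)
    finally show ?thesis .
  qed
  also have "sum C ((\<lambda>(j,i). Star j i) ` (N \<times> I)) = (\<Sum>j\<in>N. (l j - 1) * X)"
  proof -
    have "sum C ((\<lambda>(j,i). Star j i) ` (N \<times> I)) = (\<Sum>(j,i)\<in>N \<times> I. C (Star j i))"
      by (subst sum.reindex) (auto simp: inj_on_def intro!: sum.cong)
    also have "\<dots> = (\<Sum>j\<in>N. \<Sum>i\<in>I. C (Star j i))" by (simp add: sum.cartesian_product)
    also have "\<dots> = (\<Sum>j\<in>N. (l j - 1) * X)" by (simp add: C_def I_def mult.commute)
    finally show ?thesis .
  qed
  also have "(\<Sum>j\<in>N. c j) \<le> n * k"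
  proof -
    have "(\<Sum>j\<in>N. c j) \<le> (\<Sum>j\<in>N. k)" by (rule sum_mono) (use c1 N_def in auto)
    then show ?thesis by (simp add: N_def)
  qed
  also have "(\<Sum>j\<in>N. X * X) + (\<Sum>j\<in>N. X * X * u j) + (\<Sum>j\<in>N. (l j - 1) * X)
      = (\<Sum>j\<in>N. (1 + u j) * X^2 + (l j - 1) * X)"
    unfolding sum.distrib[symmetric] by (rule sum.cong) (simp_all add: power2_eq_square)
  ultimately have "total_completion (red_jobs n k V0 chi) C \<le> red_K n k V0 chi"
    unfolding red_K_def N_def X_def u_def l_def by linarith
  then show ?thesis using feas unfolding p_def by blast
qed

end
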